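(* Let $E$ be a finite set and $\mathcal{W} \subseteq \{+,-,0\}^E$. Then $\mathcal{W}$ is an affine oriented matroid if and only if $\mathcal{W}$ satisfies the following three axioms: (A1) if $X,Y \in \mathcal{W}$ then $X \circ Y \in \mathcal{W}$ and $X \circ (-Y) \in \mathcal{W}$; (A2) if $X,Y \in \mathcal{W}$ with $\underline{X}=\underline{Y}$, then $I_e(X,Y) \cap \mathcal{W} \neq \emptyset$ for every $e \in S(X,Y)$; (A3) $\mathcal{P}(\mathcal{W}) \circ \mathcal{W} \subseteq \mathcal{W}$.
   Context: A sign vector on a finite set $E$ is an element $X \in \{+,-,0\}^E$; write $X^{+}=\{e: X_e=+\}$, $X^-=\{e:X_e=-\}$, support $\underline{X}=X^+\cup X^-$. The opposite $-X$ has $(-X)_e=-X_e$. Composition: $(X\circ Y)_e = X_e$ if $X_e\neq 0$ and $Y_e$ otherwise. Separation set: $S(X,Y)=(X^+\cap Y^-)\cup(X^-\cap Y^+)$. For sets $\mathcal{A},\mathcal{B}$ of sign vectors, $\mathcal{A}\circ\mathcal{B}=\{A\circ B: A\in\mathcal{A},B\in\mathcal{B}\}$. A set $\mathcal{O}\subseteq\{+,-,0\}^{F}$ is (the covector set of) an oriented matroid on $F$ if: (O1) the zero vector lies in $\mathcal{O}$; (O2) $X\in\mathcal{O}\Rightarrow -X\in\mathcal{O}$; (O3) $X,Y\in\mathcal{O}\Rightarrow X\circ Y\in\mathcal{O}$; (O4) if $X,Y\in\mathcal{O}$ with $\underline{X}=\underline{Y}$ and $e\in S(X,Y)$, there is $Z\in\mathcal{O}$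 with $Z_e=0$ and $Z_f=(X\circ Y)_f=(Y\circ X)_f$ for all $f\notin S(X,Y)$. $\mathcal{W}\subseteq\{+,-,0\}^E$ is an affine oriented matroid if there exist an element $g\notin E$ and an oriented matroid $\mathcal{O}$ on $E\cup\{g\}$ such that $\mathcal{W}=\{X|_E : X\in\mathcal{O},\ X_g=+\}$. For $X,Y$ with $\underline{X}=\underline{Y}$ and $X\neq Y$, and $e\in S(X,Y)$: $I_e(X,Y)=\{V\in\{+,-,0\}^E : \underline{V}\subseteq \underline{X}\setminus\{e\},\ V_f=X_f \text{ for all } f\notin S(X,Y)\}$, and $I(X,Y)=\bigcup_{e\in S(X,Y)} I_e(X,Y)$. Sum: $(X+Y)_e=0$ if $e\in S(X,Y)$, and $(X+Y)_e=(X\circ Y)_e$ otherwise. For $\mathcal{W}\subseteq\{+,-,0\}^E$: $\mathrm{sym}(\mathcal{W})=\{V: V\in\mathcal{W}, -V\in\mathcal{W}\}$, $\mathrm{asym}(\mathcal{W})=\{V\in\mathcal{W}: -V\notin\mathcal{W}\}$, and $\mathcal{P}(\mathcal{W})=\{X+(-Y): X,Y\in\mathrm{asym}(\mathcal{W}),\ \underline{X}=\underline{Y},\ I(X,-Y)\cap\mathcal{W}=I(-X,Y)\cap\mathcal{W}=\emptyset\}$. *)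

theory Defs
  imports Main
begin

datatype sign = Pos | Neg | Zer

type_synonym 'a sv = "'a \<Rightarrow> sign"

definition signvecs :: "'a set \<Rightarrow> 'a sv set" where
  "signvecs E = {X. \<forall>e. e \<notin> E \<longrightarrow> X e = Zer}"

definition pos_part :: "'a sv \<Rightarrow> 'a set" where "pos_part X = {e. X e = Pos}"
definition neg_part :: "'a sv \<Rightarrow> 'a set" where "neg_part X = {e. X e = Neg}"
definition supp :: "'a sv \<Rightarrow> 'a set" where "supp X = pos_part X \<union> neg_part X"

fun neg_sign :: "sign \<Rightarrow> sign" where
  "neg_sign Pos = Neg" | "neg_sign Neg = Pos" | "neg_sign Zer = Zer"

definition opp :: "'a sv \<Rightarrow> 'a sv" where "opp X = (\<lambda>e. neg_sign (X e))"

definition comp :: "'a sv \<Rightarrow> 'a sv \<Rightarrow> 'a sv" where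
  "comp X Y = (\<lambda>e. if X e \<noteq> Zer then X e else Y e)"

definition sep :: "'a sv \<Rightarrow> 'a sv \<Rightarrow> 'a set" where
  "sep X Y = (pos_part X \<inter> neg_part Y) \<union> (neg_part X \<inter> pos_part Y)"

definition comp_set :: "'a sv set \<Rightarrow> 'a sv set \<Rightarrow> 'a sv set" where
  "comp_set A B = {comp X Y | X Y. X \<in> A \<and> Y \<in> B}"

definition oriented_matroid :: "'a set \<Rightarrow> 'a sv set \<Rightarrow> bool" where
  "oriented_matroid F OM \<longleftrightarrow>
     OM \<subseteq> signvecs F \<and>
     (\<lambda>_. Zer) \<in> OM \<and>
     (\<forall>X\<in>OM. opp X \<in> OM) \<and>
     (\<forall>X\<in>OM. \<forall>Y\<in>OM. comp X Y \<in> OM) \<and>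
     (\<forall>X\<in>OM. \<forall>Y\<in>OM. supp X = supp Y \<longrightarrow> (\<forall>e\<in>sep X Y.
        (\<exists>Z\<in>OM. Z e = Zer \<and> (\<forall>f. f \<notin> sep X Y \<longrightarrow>
            Z f = comp X Y f \<and> Z f = comp Y X f))))"

text \<open>The extra element g is realised as None in the ground set Some ` E \<union> {None}.\<close>
definition affine_oriented_matroid :: "'a set \<Rightarrow> 'a sv set \<Rightarrow> bool" where
  "affine_oriented_matroid E W \<longleftrightarrow>
     (\<exists>OM :: ('a option) sv set. oriented_matroid (insert None (Some ` E)) OM \<and>
        W = {(\<lambda>e. X (Some e)) | X. X \<in> OM \<and> X None = Pos})"

definition I_e :: "'a set \<Rightarrow> 'a \<Rightarrow> 'a sv \<Rightarrow> 'a sv \<Rightarrow> 'a sv set" where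
  "I_e E e X Y = {V \<in> signvecs E. supp V \<subseteq> supp X - {e} \<and>
                    (\<forall>f\<in>E. f \<notin> sep X Y \<longrightarrow> V f = X f)}"

definition I_all :: "'a set \<Rightarrow> 'a sv \<Rightarrow> 'a sv \<Rightarrow> 'a sv set" where
  "I_all E X Y = (\<Union>e\<in>sep X Y. I_e E e X Y)"

definition sv_sum :: "'a sv \<Rightarrow> 'a sv \<Rightarrow> 'a sv" where
  "sv_sum X Y = (\<lambda>e. if e \<in> sep X Y then Zer else comp X Y e)"

definition sym_part :: "'a sv set \<Rightarrow> 'a sv set" where
  "sym_part W = {V. V \<in> W \<and> opp V \<in> W}"

definition asym_part :: "'a sv set \<Rightarrow> 'a sv set" where
  "asym_part W = {V \<in> W. opp V \<notin> W}"

definition P_set :: "'a set \<Rightarrow> 'a sv set \<Rightarrow> 'a sv set" where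
  "P_set E W = {sv_sum X (opp Y) | X Y. X \<in> asym_part W \<and> Y \<in> asym_part W \<and>
      supp X = supp Y \<and> I_all E X (opp Y) \<inter> W = {} \<and> I_all E (opp X) Y \<inter> W = {}}"

definition A1 :: "'a sv set \<Rightarrow> bool" where
  "A1 W \<longleftrightarrow> (\<forall>X\<in>W. \<forall>Y\<in>W. comp X Y \<in> W \<and> comp X (opp Y) \<in> W)"

definition A2 :: "'a set \<Rightarrow> 'a sv set \<Rightarrow> bool" where
  "A2 E W \<longleftrightarrow> (\<forall>X\<in>W. \<forall>Y\<in>W. supp X = supp Y \<longrightarrow>
      (\<forall>e\<in>sep X Y. I_e E e X Y \<inter> W \<noteq> {}))"

definition A3 :: "'a set \<Rightarrow> 'a sv set \<Rightarrow> bool" where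
  "A3 E W \<longleftrightarrow> comp_set (P_set E W) W \<subseteq> W"

end

theory Submission
  imports Defs
begin

lemma supp_iff[simp]: "f \<in> supp X \<longleftrightarrow> X f \<noteq> Zer"
  by (cases "X f") (auto simp: supp_def pos_part_def neg_part_def)

lemma sep_iff[simp]: "f \<in> sep X Y \<longleftrightarrow> (X f = Pos \<and> Y f = Neg) \<or> (X f = Neg \<and> Y f = Pos)"
  by (auto simp: sep_def pos_part_def neg_part_def)

lemma comp_apply[simp]: "comp X Y f = (if X f = Zer then Y f else X f)"
  by (auto simp: comp_def)

lemma opp_apply[simp]: "opp X f = neg_sign (X f)"
  by (simp add: opp_def)

lemma neg_sign_Zer[simp]: "neg_sign s = Zer \<longleftrightarrow> s = Zer"
  by (cases s) auto
lemma neg_sign_Pos[simp]: "neg_sign s = Pos \<longleftrightarrow> s = Neg"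
  by (cases s) auto
lemma neg_sign_Neg[simp]: "neg_sign s = Neg \<longleftrightarrow> s = Pos"
  by (cases s) auto
lemma neg_neg_sign[simp]: "neg_sign (neg_sign s) = s"
  by (cases s) auto

lemma opp_opp[simp]: "opp (opp X) = X"
  by (simp add: opp_def)

lemma supp_eq_iff: "supp X = supp Y \<longleftrightarrow> (\<forall>f. X f = Zer \<longleftrightarrow> Y f = Zer)"
  by auto

lemma supp_opp[simp]: "supp (opp X) = supp X" by auto

lemma supp_eqD: "supp A = supp B \<Longrightarrow> A f = Zer \<longleftrightarrow> B f = Zer"
  by (metis supp_iff)

lemma signvecs_iff: "X \<in> signvecs E \<longleftrightarrow> (\<forall>e. e \<notin> E \<longrightarrow> X e = Zer)"
  by (simp add: signvecs_def)

lemma sv_sum_apply: "sv_sum X Y f = (if f \<in> sep X Y then Zer else comp X Y f)"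
  by (simp add: sv_sum_def)

lemma sep_sym: "sep X Y = sep Y X" by auto
lemma sep_opp: "sep (opp X) Y = sep X (opp Y)" by auto

lemma offsep_eq: "supp X = supp Y \<Longrightarrow> f \<notin> sep X Y \<Longrightarrow> Y f = X f"
  unfolding supp_eq_iff by (erule allE[of _ f]; cases "X f"; cases "Y f") auto

lemma offsep_opp: "supp X = supp Y \<Longrightarrow> f \<notin> sep X (opp Y) \<Longrightarrow> opp Y f = X f"
  unfolding supp_eq_iff by (erule allE[of _ f]; cases "X f"; cases "Y f") auto

locale axW =
  fixes E :: "'a set" and W :: "'a sv set"
  assumes finE: "finite E" and subW: "W \<subseteq> signvecs E"
    and a1: "A1 W" and a2: "A2 E W" and a3: "A3 E W"
begin

lemma W_zero: "X \<in> W \<Longrightarrow> e \<notin> E \<Longrightarrow> X e = Zer"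
  using subW by (auto simp: signvecs_iff)

lemma W_supp: "X \<in> W \<Longrightarrow> supp X \<subseteq> E"
  by (meson W_zero subsetI supp_iff)

lemma W_comp: "X \<in> W \<Longrightarrow> Y \<in> W \<Longrightarrow> comp X Y \<in> W"
  using a1 by (auto simp: A1_def)

lemma W_comp_opp: "X \<in> W \<Longrightarrow> Y \<in> W \<Longrightarrow> comp X (opp Y) \<in> W"
  using a1 by (auto simp: A1_def)

lemma W_elim:
  assumes "X \<in> W" "Y \<in> W" "supp X = supp Y" "e \<in> sep X Y"
  shows "\<exists>Z\<in>W. Z e = Zer \<and> supp Z \<subseteq> supp X \<and> (\<forall>f. f \<notin> sep X Y \<longrightarrow> Z f = X f)"
proof -
  from a2 assms obtain Z where Z: "Z \<in> I_e E e X Y" "Z \<in> W"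
    unfolding A2_def by blast
  have "Z f = X f" if "f \<notin> sep X Y" for f
  proof (cases "f \<in> E")
    case True then show ?thesis using Z that by (auto simp: I_e_def)
  next
    case False then show ?thesis using W_zero[OF Z(2) False] W_zero[OF assms(1) False] by simp
  qed
  moreover have "Z e = Zer" "supp Z \<subseteq> supp X" using Z by (auto simp: I_e_def)
  ultimately show ?thesis using Z by blast
qed

definition D :: "'a sv set" where
  "D = {V \<in> signvecs E. \<forall>X\<in>W. comp V X \<in> W \<and> comp (opp V) X \<in> W}"

lemma D_opp: "V \<in> D \<Longrightarrow> opp V \<in> D"
  by (auto simp: D_def signvecs_iff)

lemma D_compW: "V \<in> D \<Longrightarrow> X \<in> W \<Longrightarrow> comp V X \<in> W"
  by (auto simp: D_def)

lemma comp_assoc: "comp (comp A B) C = comp A (comp B C)"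
  by (rule ext) auto

lemma opp_comp: "opp (comp A B) = comp (opp A) (opp B)"
  by (rule ext) auto

lemma D_comp: "V \<in> D \<Longrightarrow> U \<in> D \<Longrightarrow> comp V U \<in> D"
proof -
  assume V: "V \<in> D" and U: "U \<in> D"
  have "comp V U \<in> signvecs E" using V U by (auto simp: D_def signvecs_iff)
  moreover have "comp (comp V U) X \<in> W \<and> comp (opp (comp V U)) X \<in> W" if "X \<in> W" for X
    using V U that unfolding D_def comp_assoc opp_comp by blast
  ultimately show ?thesis unfolding D_def by blast
qed

lemma D_zero: "(\<lambda>_. Zer) \<in> D"
proof -
  have "comp (\<lambda>_. Zer) X = X" "comp (opp (\<lambda>_. Zer)) X = X" for X :: "'a sv"
    by (auto intro!: ext)
  then show ?thesis by (auto simp: D_def signvecs_iff simp del: comp_apply opp_apply)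
qed

lemma W_comp_D: "X \<in> W \<Longrightarrow> V \<in> D \<Longrightarrow> comp X V \<in> W"
proof -
  assume X: "X \<in> W" and V: "V \<in> D"
  have "comp X V = comp X (comp V X)" by (rule ext) auto
  then show ?thesis using W_comp[OF X D_compW[OF V X]] by simp
qed

lemma sym_D: "X \<in> W \<Longrightarrow> opp X \<in> W \<Longrightarrow> X \<in> D"
  unfolding D_def using subW W_comp by auto

lemma I_e_sym:
  assumes s: "supp A = supp B"
  shows "I_e E e A B = I_e E e B A"
proof -
  have ss: "sep B A = sep A B" by (rule sep_sym)
  have eq: "(\<forall>f\<in>E. f \<notin> sep A B \<longrightarrow> V f = A f) \<longleftrightarrow> (\<forall>f\<in>E. f \<notin> sep B A \<longrightarrow> V f = B f)" for V
    unfolding ss using offsep_eq[OF s] by (metis (no_types))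
  show ?thesis unfolding I_e_def s using eq by (simp only: s)
qed

lemma I_all_sym:
  assumes "supp A = supp B" shows "I_all E A B = I_all E B A"
proof -
  have "sep B A = sep A B" by (rule sep_sym)
  then show ?thesis unfolding I_all_def using I_e_sym[OF assms] by simp
qed


lemma P_opp: "p \<in> P_set E W \<Longrightarrow> opp p \<in> P_set E W"
proof -
  assume "p \<in> P_set E W"
  then obtain X Y where XY: "p = sv_sum X (opp Y)" "X \<in> asym_part W" "Y \<in> asym_part W"
    "supp X = supp Y" "I_all E X (opp Y) \<inter> W = {}" "I_all E (opp X) Y \<inter> W = {}"
    unfolding P_set_def by blast
  have "opp p = sv_sum Y (opp X)"
  proof
    fix f show "opp p f = sv_sum Y (opp X) f"
      unfolding XY(1) sv_sum_apply by (cases "X f"; cases "Y f") auto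
  qed
  moreover have "I_all E Y (opp X) = I_all E (opp X) Y"
    using XY(4) by (intro I_all_sym) simp
  moreover have "I_all E (opp Y) X = I_all E X (opp Y)"
    using XY(4) by (intro I_all_sym) simp
  ultimately have "Y \<in> asym_part W \<and> X \<in> asym_part W \<and> supp Y = supp X \<and>
      I_all E Y (opp X) \<inter> W = {} \<and> I_all E (opp Y) X \<inter> W = {}"
    using XY by simp
  then have "sv_sum Y (opp X) \<in> P_set E W"
    unfolding P_set_def by (intro CollectI exI[of _ Y] exI[of _ X]) simp
  then show ?thesis using \<open>opp p = sv_sum Y (opp X)\<close> by simp
qed

lemma P_signvecs: "p \<in> P_set E W \<Longrightarrow> p \<in> signvecs E"
proof -
  assume "p \<in> P_set E W"
  then obtain X Y where XY: "p = sv_sum X (opp Y)" "X \<in> W" "Y \<in> W"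
    unfolding P_set_def asym_part_def by blast
  show ?thesis unfolding signvecs_iff
  proof (intro allI impI)
    fix e assume "e \<notin> E"
    then have "X e = Zer" "Y e = Zer" using W_zero XY by auto
    then show "p e = Zer" unfolding XY(1) sv_sum_apply by simp
  qed
qed

lemma P_compW: "p \<in> P_set E W \<Longrightarrow> X \<in> W \<Longrightarrow> comp p X \<in> W"
proof -
  assume "p \<in> P_set E W" "X \<in> W"
  then have "comp p X \<in> comp_set (P_set E W) W" unfolding comp_set_def by blast
  then show ?thesis using a3 unfolding A3_def by blast
qed

lemma P_D: "p \<in> P_set E W \<Longrightarrow> p \<in> D"
  unfolding D_def using P_compW P_opp P_signvecs by blast

end

context axW
begin

lemma I_e_off:
  assumes "Y \<in> I_e E k A B" "A \<in> signvecs E" "f \<notin> sep A B"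
  shows "Y f = A f"
proof (cases "f \<in> E")
  case True
  have "\<forall>f\<in>E. f \<notin> sep A B \<longrightarrow> Y f = A f" using assms(1) unfolding I_e_def by blast
  then show ?thesis using True assms(3) by blast
next
  case False
  have "Y \<in> signvecs E" using assms(1) unfolding I_e_def by blast
  then show ?thesis using False assms(2) by (auto simp: signvecs_iff)
qed

lemma W_sv: "A \<in> W \<Longrightarrow> A \<in> signvecs E" using subW by auto
lemma opp_sv: "A \<in> signvecs E \<Longrightarrow> opp A \<in> signvecs E" by (auto simp: signvecs_iff)

lemma I_e_supp: "Y \<in> I_e E k A B \<Longrightarrow> supp Y \<subseteq> supp A - {k}"
  unfolding I_e_def by blast

lemma finite_sep: "A \<in> W \<Longrightarrow> finite (sep A B)"
proof -
  assume "A \<in> W"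
  moreover have "sep A B \<subseteq> supp A" by auto
  ultimately have "sep A B \<subseteq> E" using W_supp[of A] by blast
  then show ?thesis using finE finite_subset by blast
qed

lemma G:
  assumes "A \<in> W" "B \<in> W" "supp A = supp B" "N \<subseteq> supp A"
    "\<forall>Y\<in>W. supp Y \<subseteq> supp A \<longrightarrow> (\<forall>f\<in>N. Y f = A f)"
  shows "\<exists>Z\<in>D. (\<forall>f. f \<notin> sep A (opp B) \<longrightarrow> Z f = A f) \<and> (\<forall>f\<in>N. Z f = Zer)"
  using assms
proof (induction "card (sep A (opp B))" arbitrary: A B rule: less_induct)
  case less
  note AW = less.prems(1) and BW = less.prems(2) and sAB = less.prems(3)
    and NA = less.prems(4) and hyp0 = less.prems(5)
  have hyp: "Y f = A f" if "Y \<in> W" "supp Y \<subseteq> supp A" "f \<in> N" for Y f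
    using hyp0 that by blast
  consider (symA) "opp A \<in> W" | (symB) "opp B \<in> W"
    | (obA) k Y where "k \<in> sep A (opp B)" "Y \<in> W" "Y \<in> I_e E k A (opp B)"
    | (obB) k Y where "k \<in> sep (opp A) B" "Y \<in> W" "Y \<in> I_e E k (opp A) B"
    | (base) "opp A \<notin> W" "opp B \<notin> W" "I_all E A (opp B) \<inter> W = {}" "I_all E (opp A) B \<inter> W = {}"
    unfolding I_all_def by blast
  then show ?case
  proof cases
    case symA
    have "N = {}"
    proof (rule ccontr)
      assume "N \<noteq> {}"
      then obtain f where f: "f \<in> N" by blast
      have "opp A f = A f" using hyp[OF symA _ f] by simp
      moreover have "A f \<noteq> Zer" using NA f by auto
      ultimately show False by (cases "A f") auto
    qed
    then show ?thesis using sym_D[OF AW] symA by blast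
  next
    case symB
    have "N = {}"
    proof (rule ccontr)
      assume "N \<noteq> {}"
      then obtain f where f: "f \<in> N" by blast
      have "opp B f = A f" using hyp[OF symB _ f] sAB by simp
      moreover have "B f = A f" using hyp[OF BW _ f] sAB by simp
      moreover have "A f \<noteq> Zer" using NA f by auto
      ultimately show False by (cases "A f") auto
    qed
    moreover have "opp B \<in> D" using sym_D[OF symB] BW by simp
    ultimately show ?thesis using offsep_opp[OF sAB] by blast
  next
    case (obA k Y)
    define A' where "A' = comp Y (opp A)"
    have A'W: "A' \<in> W" unfolding A'_def using W_comp_opp obA AW by blast
    have Yoff: "Y f = A f" if "f \<notin> sep A (opp B)" for f
      using I_e_off[OF obA(3) W_sv[OF AW] that] .
    have Ysupp: "supp Y \<subseteq> supp A - {k}" using I_e_supp[OF obA(3)] .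
    have A'off: "A' f = A f" if "f \<notin> sep A (opp B)" for f
      using Yoff[OF that] unfolding A'_def by (cases "A f") auto
    have sA': "supp A' = supp A"
    proof -
      have YA: "Y f = Zer" if "A f = Zer" for f
      proof -
        have "f \<notin> supp A" using that by simp
        then have "f \<notin> supp Y" using Ysupp by blast
        then show ?thesis by simp
      qed
      have "A' f = Zer \<longleftrightarrow> A f = Zer" for f
        using YA[of f] unfolding A'_def by (cases "A f"; cases "Y f") auto
      then show ?thesis by auto
    qed
    have sepsub: "sep A' (opp B) \<subseteq> sep A (opp B) - {k}"
    proof
      fix f assume f: "f \<in> sep A' (opp B)"
      have "f \<in> sep A (opp B)"
      proof (rule ccontr)
        assume "f \<notin> sep A (opp B)"
        then show False using A'off f by auto
      qed
      moreover have "f \<noteq> k"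
      proof
        assume "f = k"
        have "k \<notin> supp Y" using Ysupp by blast
        then have "Y k = Zer" by simp
        then show False using f obA(1) \<open>f = k\<close> unfolding A'_def
          by (cases "A k"; cases "B k") auto
      qed
      ultimately show "f \<in> sep A (opp B) - {k}" by blast
    qed
    have "sep A' (opp B) \<subset> sep A (opp B)" using sepsub obA(1) by blast
    then have lt: "card (sep A' (opp B)) < card (sep A (opp B))"
      by (rule psubset_card_mono[OF finite_sep[OF AW]])
    have NA': "N \<subseteq> supp A'" using NA sA' by simp
    have hyp': "\<forall>Y'\<in>W. supp Y' \<subseteq> supp A' \<longrightarrow> (\<forall>f\<in>N. Y' f = A' f)"
    proof (intro ballI impI)
      fix Y' f assume Y': "Y' \<in> W" "supp Y' \<subseteq> supp A'" and f: "f \<in> N"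
      have "supp Y \<subseteq> supp A" using Ysupp by blast
      then have "Y f = A f" using hyp[OF obA(2) _ f] by blast
      moreover have "A f \<noteq> Zer" using NA f by auto
      ultimately have "A' f = A f" by (simp add: A'_def)
      moreover have "supp Y' \<subseteq> supp A" using Y'(2) unfolding sA' .
      ultimately show "Y' f = A' f" using hyp[OF Y'(1) _ f] by simp
    qed
    obtain Z where Z: "Z \<in> D" "\<forall>f. f \<notin> sep A' (opp B) \<longrightarrow> Z f = A' f" "\<forall>f\<in>N. Z f = Zer"
      using less.hyps[OF lt A'W BW _ NA' hyp'] sA' sAB by (metis (no_types, lifting))
    show ?thesis
    proof (intro bexI conjI allI impI ballI)
      fix f assume f: "f \<notin> sep A (opp B)"
      then have "f \<notin> sep A' (opp B)" using sepsub by blast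
      then show "Z f = A f" using Z(2) A'off[OF f] by simp
    qed (use Z in auto)
  next
    case (obB k Y)
    define B' where "B' = comp Y (opp B)"
    have B'W: "B' \<in> W" unfolding B'_def using W_comp_opp obB BW by blast
    have Yoff: "Y f = B f" if "f \<notin> sep A (opp B)" for f
    proof -
      have "f \<notin> sep (opp A) B" using that by (simp add: sep_opp)
      then have "Y f = opp A f" using I_e_off[OF obB(3) opp_sv[OF W_sv[OF AW]]] by blast
      moreover have "opp A f = B f" using that supp_eqD[OF sAB, of f] by (cases "A f"; cases "B f") auto
      ultimately show ?thesis by simp
    qed
    have Ysupp: "supp Y \<subseteq> supp B - {k}" using I_e_supp[OF obB(3)] sAB by simp
    have B'off: "B' f = B f" if "f \<notin> sep A (opp B)" for f
      using Yoff[OF that] unfolding B'_def by (cases "B f") auto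
    have sB': "supp B' = supp B"
    proof -
      have YA: "Y f = Zer" if "B f = Zer" for f
      proof -
        have "f \<notin> supp B" using that by simp
        then have "f \<notin> supp Y" using Ysupp by blast
        then show ?thesis by simp
      qed
      have "B' f = Zer \<longleftrightarrow> B f = Zer" for f
        using YA[of f] unfolding B'_def by (cases "B f"; cases "Y f") auto
      then show ?thesis by auto
    qed
    have k: "k \<in> sep A (opp B)" using obB(1) by (simp add: sep_opp)
    have sepsub: "sep A (opp B') \<subseteq> sep A (opp B) - {k}"
    proof
      fix f assume f: "f \<in> sep A (opp B')"
      have "f \<in> sep A (opp B)"
      proof (rule ccontr)
        assume "f \<notin> sep A (opp B)"
        then show False using B'off f by auto
      qed
      moreover have "f \<noteq> k"
      proof
        assume "f = k"
        have "k \<notin> supp Y" using Ysupp by blast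
        then have "Y k = Zer" by simp
        then show False using f k \<open>f = k\<close> unfolding B'_def
          by (cases "A k"; cases "B k") auto
      qed
      ultimately show "f \<in> sep A (opp B) - {k}" by blast
    qed
    have "sep A (opp B') \<subset> sep A (opp B)" using sepsub k by blast
    then have lt: "card (sep A (opp B')) < card (sep A (opp B))"
      by (rule psubset_card_mono[OF finite_sep[OF AW]])
    obtain Z where Z: "Z \<in> D" "\<forall>f. f \<notin> sep A (opp B') \<longrightarrow> Z f = A f" "\<forall>f\<in>N. Z f = Zer"
      using less.hyps[OF lt AW B'W _ NA hyp0] sB' sAB by (metis (no_types, lifting))
    show ?thesis
    proof (intro bexI conjI allI impI ballI)
      fix f assume f: "f \<notin> sep A (opp B)"
      then have "f \<notin> sep A (opp B')" using sepsub by blast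
      then show "Z f = A f" using Z(2) by simp
    qed (use Z in auto)
  next
    case base
    have "sv_sum A (opp B) \<in> P_set E W"
      unfolding P_set_def asym_part_def using base AW BW sAB by blast
    then have PD: "sv_sum A (opp B) \<in> D" by (rule P_D)
    show ?thesis
    proof (intro bexI conjI allI impI ballI)
      fix f assume "f \<notin> sep A (opp B)"
      then show "sv_sum A (opp B) f = A f" using supp_eqD[OF sAB, of f]
        unfolding sv_sum_apply by (cases "A f"; cases "B f") auto
    next
      fix f assume f: "f \<in> N"
      have "B f = A f" using hyp[OF BW _ f] sAB by simp
      moreover have "A f \<noteq> Zer" using NA f by auto
      ultimately show "sv_sum A (opp B) f = Zer" unfolding sv_sum_apply by (cases "A f") auto
    qed (rule PD)
  qed
qed

end

context axW
begin

lemma H1: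
  assumes "A \<in> W" "B \<in> W" "supp A = supp B"
  shows "\<exists>Z\<in>D. \<forall>f. f \<notin> sep A (opp B) \<longrightarrow> Z f = A f"
  using G[OF assms, of "{}"] by auto

lemma H2:
  assumes AW: "A \<in> W" and BW: "B \<in> W" and sAB: "supp A = supp B" and k: "k \<in> sep A (opp B)"
  shows "\<exists>Z. (Z \<in> W \<or> opp Z \<in> W \<or> Z \<in> D) \<and> Z k = Zer \<and> (\<forall>f. f \<notin> sep A (opp B) \<longrightarrow> Z f = A f)"
proof -
  obtain Z1 where Z1: "Z1 \<in> D" "\<forall>f. f \<notin> sep A (opp B) \<longrightarrow> Z1 f = A f"
    using H1[OF AW BW sAB] by blast
  have Z1A: "A f = Zer \<Longrightarrow> Z1 f = Zer" for f using Z1(2) by (cases "A f") auto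
  have AkBk: "B k = A k" "A k \<noteq> Zer" using k by auto
  consider (z) "Z1 k = Zer" | (same) "Z1 k = A k" | (oppo) "Z1 k = neg_sign (A k)"
    using AkBk(2) by (cases "Z1 k"; cases "A k") auto
  then show ?thesis
  proof cases
    case z then show ?thesis using Z1 by blast
  next
    case same
    define C where "C = comp (opp Z1) A"
    have CW: "C \<in> W" unfolding C_def using D_compW[OF D_opp[OF Z1(1)] AW] .
    have sC: "supp B = supp C"
    proof -
      have "B f = Zer \<longleftrightarrow> C f = Zer" for f
        using Z1A[of f] supp_eqD[OF sAB, of f] unfolding C_def by (cases "A f"; cases "Z1 f") auto
      then show ?thesis by auto
    qed
    have kBC: "k \<in> sep B C" using same AkBk unfolding C_def by (cases "A k") auto
    obtain T where T: "T \<in> W" "T k = Zer" "\<forall>f. f \<notin> sep B C \<longrightarrow> T f = B f"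
      using W_elim[OF BW CW sC kBC] by blast
    show ?thesis
    proof (intro exI conjI allI impI)
      show "opp T \<in> W \<or> opp (opp T) \<in> W \<or> opp T \<in> D" using T by simp
      show "opp T k = Zer" using T by simp
      fix f assume f: "f \<notin> sep A (opp B)"
      have "B f = neg_sign (A f)" using f supp_eqD[OF sAB, of f] by (cases "A f"; cases "B f") auto
      moreover have "C f = neg_sign (A f)" using Z1(2) f unfolding C_def by (cases "A f") auto
      ultimately have "f \<notin> sep B C" by (cases "A f") auto
      then show "opp T f = A f" using T(3) \<open>B f = neg_sign (A f)\<close> by simp
    qed
  next
    case oppo
    define C where "C = comp Z1 A"
    have CW: "C \<in> W" unfolding C_def using D_compW[OF Z1(1) AW] .
    have sC: "supp A = supp C"
    proof -
      have "A f = Zer \<longleftrightarrow> C f = Zer" for f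
        using Z1A[of f] unfolding C_def by (cases "A f"; cases "Z1 f") auto
      then show ?thesis by auto
    qed
    have kAC: "k \<in> sep A C" using oppo AkBk unfolding C_def by (cases "A k") auto
    obtain T where T: "T \<in> W" "T k = Zer" "\<forall>f. f \<notin> sep A C \<longrightarrow> T f = A f"
      using W_elim[OF AW CW sC kAC] by blast
    show ?thesis
    proof (intro exI conjI allI impI)
      show "T \<in> W \<or> opp T \<in> W \<or> T \<in> D" using T by simp
      show "T k = Zer" using T by simp
      fix f assume f: "f \<notin> sep A (opp B)"
      have "C f = A f" using Z1(2) f unfolding C_def by (cases "A f") auto
      then have "f \<notin> sep A C" by (cases "A f") auto
      then show "T f = A f" using T(3) by simp
    qed
  qed
qed

end

context axW
begin

lemma D_sv: "V \<in> D \<Longrightarrow> V \<in> signvecs E" by (simp add: D_def)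

lemma D_elim:
  assumes VD: "V \<in> D" and UD: "U \<in> D" and sVU: "supp V = supp U" and e: "e \<in> sep V U"
  shows "\<exists>Z\<in>D. Z e = Zer \<and> (\<forall>f. f \<notin> sep V U \<longrightarrow> Z f = V f)"
proof (cases "W = {}")
  case True
  have "sv_sum V U \<in> signvecs E"
    using D_sv[OF VD] D_sv[OF UD] by (auto simp: signvecs_iff sv_sum_apply)
  then have "sv_sum V U \<in> D" unfolding D_def using True by blast
  moreover have "sv_sum V U e = Zer" using e by (simp add: sv_sum_apply)
  moreover have "sv_sum V U f = V f" if "f \<notin> sep V U" for f
    using that supp_eqD[OF sVU, of f] by (cases "V f"; cases "U f") (auto simp: sv_sum_apply)
  ultimately show ?thesis by blast
next
  case False
  define \<sigma> where "\<sigma> = supp V"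
  obtain X where X: "X \<in> W" "\<forall>Y. Y \<in> W \<longrightarrow> card (supp X - \<sigma>) \<le> card (supp Y - \<sigma>)"
    using ex_has_least_nat[of "\<lambda>X. X \<in> W", of _ "\<lambda>X. card (supp X - \<sigma>)"] False by blast
  define N where "N = supp X - \<sigma>"
  have finN: "finite N" unfolding N_def using W_supp[OF X(1)] finE finite_subset by blast
  have small: False if "Y \<in> W" "supp Y - \<sigma> \<subseteq> N - {f}" "f \<in> N" for Y f
  proof -
    have "card (supp Y - \<sigma>) \<le> card (N - {f})"
      using that(2) finN by (intro card_mono) auto
    also have "\<dots> < card N" using card_Diff1_less[OF finN that(3)] .
    finally have "card (supp Y - \<sigma>) < card N" .
    moreover have "card N \<le> card (supp Y - \<sigma>)" using X(2) that(1) unfolding N_def by blast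
    ultimately show False by linarith
  qed
  have hypN: "Y f = X f" if Y: "Y \<in> W" "supp Y \<subseteq> \<sigma> \<union> N" and f: "f \<in> N" for Y f
  proof (rule ccontr)
    assume ne: "Y f \<noteq> X f"
    have Xf: "X f \<noteq> Zer" "V f = Zer" using f unfolding N_def \<sigma>_def by auto
    show False
    proof (cases "Y f = Zer")
      case True
      then have "supp Y - \<sigma> \<subseteq> N - {f}" using Y by auto
      then show False using small Y f by blast
    next
      case False
      have W1: "comp X Y \<in> W" "comp Y X \<in> W" using W_comp X Y by auto
      have s1: "supp (comp X Y) = supp (comp Y X)" by auto
      have f1: "f \<in> sep (comp X Y) (comp Y X)" using ne False Xf
        by (cases "X f"; cases "Y f") auto
      obtain R where R: "R \<in> W" "R f = Zer" "supp R \<subseteq> supp (comp X Y)"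
        using W_elim[OF W1 s1 f1] by blast
      have "supp (comp X Y) \<subseteq> \<sigma> \<union> N" using Y unfolding N_def by auto
      then have "supp R - \<sigma> \<subseteq> N - {f}" using R by auto
      then show False using small R f by blast
    qed
  qed
  have VX: "comp V X \<in> W" "comp U X \<in> W" "comp (opp V) X \<in> W" "comp (opp U) X \<in> W"
    using D_compW D_opp VD UD X(1) by auto
  have sVX: "supp (comp V X) = supp (comp U X)" "supp (comp (opp V) X) = supp (comp (opp U) X)"
    by (rule set_eqI, simp add: supp_eqD[OF sVU])+
  have eVX: "e \<in> sep (comp V X) (comp U X)" "e \<in> sep (comp (opp V) X) (comp (opp U) X)"
    using e by auto
  obtain T where T: "T \<in> W" "T e = Zer" "supp T \<subseteq> supp (comp V X)"
     "\<forall>f. f \<notin> sep (comp V X) (comp U X) \<longrightarrow> T f = comp V X f"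
    using W_elim[OF VX(1,2) sVX(1) eVX(1)] by blast
  obtain T' where T': "T' \<in> W" "T' e = Zer" "supp T' \<subseteq> supp (comp (opp V) X)"
     "\<forall>f. f \<notin> sep (comp (opp V) X) (comp (opp U) X) \<longrightarrow> T' f = comp (opp V) X f"
    using W_elim[OF VX(3,4) sVX(2) eVX(2)] by blast
  have Toff: "T f = comp V X f" "T' f = comp (opp V) X f" if "f \<notin> sep V U" for f
  proof -
    have "f \<notin> sep (comp V X) (comp U X)" "f \<notin> sep (comp (opp V) X) (comp (opp U) X)"
      using that supp_eqD[OF sVU, of f] by (cases "V f"; cases "U f"; cases "X f"; auto)+
    then show "T f = comp V X f" "T' f = comp (opp V) X f" using T(4) T'(4) by auto
  qed
  define A where "A = comp T T'"
  define B where "B = comp T' T"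
  have AW: "A \<in> W" and BW: "B \<in> W" unfolding A_def B_def using W_comp T T' by auto
  have sAB: "supp A = supp B" unfolding A_def B_def by auto
  have sA: "supp A \<subseteq> \<sigma> \<union> N"
  proof -
    have "supp (comp V X) \<subseteq> \<sigma> \<union> N" "supp (comp (opp V) X) \<subseteq> \<sigma> \<union> N"
      unfolding N_def \<sigma>_def by auto
    moreover have "supp A \<subseteq> supp T \<union> supp T'" unfolding A_def by auto
    ultimately show ?thesis using T(3) T'(3) by blast
  qed
  have AN: "A f = X f" "X f \<noteq> Zer" if "f \<in> N" for f
  proof -
    have "V f = Zer" "X f \<noteq> Zer" using that unfolding N_def \<sigma>_def by auto
    moreover have "U f = Zer" using \<open>V f = Zer\<close> supp_eqD[OF sVU, of f] by simp
    ultimately have "f \<notin> sep V U" by auto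
    then show "A f = X f" using Toff[of f] \<open>V f = Zer\<close> \<open>X f \<noteq> Zer\<close> unfolding A_def by simp
    show "X f \<noteq> Zer" by fact
  qed
  have NA: "N \<subseteq> supp A" using AN by auto
  have hyp: "\<forall>Y\<in>W. supp Y \<subseteq> supp A \<longrightarrow> (\<forall>f\<in>N. Y f = A f)"
  proof (intro ballI impI)
    fix Y f assume "Y \<in> W" "supp Y \<subseteq> supp A" "f \<in> N"
    moreover have "supp Y \<subseteq> \<sigma> \<union> N" using \<open>supp Y \<subseteq> supp A\<close> sA by (rule subset_trans)
    ultimately show "Y f = A f" using hypN AN(1) by metis
  qed
  obtain Z where Z: "Z \<in> D" "\<forall>f. f \<notin> sep A (opp B) \<longrightarrow> Z f = A f" "\<forall>f\<in>N. Z f = Zer"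
    using G[OF AW BW sAB NA hyp] by blast
  show ?thesis
  proof (intro bexI conjI allI impI)
    have "A e = Zer" unfolding A_def using T(2) T'(2) by simp
    then have "e \<notin> sep A (opp B)" by simp
    then show "Z e = Zer" using Z(2) \<open>A e = Zer\<close> by simp
  next
    fix f assume f: "f \<notin> sep V U"
    show "Z f = V f"
    proof (cases "V f = Zer")
      case False
      have "A f = V f" "B f = neg_sign (V f)" using Toff[OF f] False unfolding A_def B_def by auto
      then have "f \<notin> sep A (opp B)" by (cases "V f") auto
      then show ?thesis using Z(2) \<open>A f = V f\<close> by simp
    next
      case True
      show ?thesis
      proof (cases "f \<in> N")
        case True then show ?thesis using Z(3) \<open>V f = Zer\<close> by simp
      next
        case notN: False
        have "X f = Zer" using notN True unfolding N_def \<sigma>_def by auto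
        then have "A f = Zer" using Toff[OF f] True unfolding A_def by simp
        then have "f \<notin> sep A (opp B)" by simp
        then show ?thesis using Z(2) True \<open>A f = Zer\<close> by simp
      qed
    qed
  qed (rule Z(1))
qed

end

definition restr :: "'a option sv \<Rightarrow> 'a sv" where "restr Y = (\<lambda>e. Y (Some e))"
definition lift :: "'a sv \<Rightarrow> sign \<Rightarrow> 'a option sv" where
  "lift X s = (\<lambda>x. case x of None \<Rightarrow> s | Some e \<Rightarrow> X e)"

lemma lift_None[simp]: "lift X s None = s" by (simp add: lift_def)
lemma lift_Some[simp]: "lift X s (Some e) = X e" by (simp add: lift_def)
lemma restr_apply[simp]: "restr Y e = Y (Some e)" by (simp add: restr_def)
lemma restr_lift[simp]: "restr (lift X s) = X" by (simp add: restr_def lift_def)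
lemma lift_restr: "lift (restr Y) (Y None) = Y"
  by (rule ext, simp add: lift_def split: option.split)

lemma sv_lift: "Y \<in> signvecs (insert None (Some ` E)) \<longleftrightarrow> restr Y \<in> signvecs E"
proof
  assume "Y \<in> signvecs (insert None (Some ` E))"
  then show "restr Y \<in> signvecs E" by (auto simp: signvecs_iff)
next
  assume a: "restr Y \<in> signvecs E"
  show "Y \<in> signvecs (insert None (Some ` E))" unfolding signvecs_iff
  proof (intro allI impI)
    fix x assume "x \<notin> insert None (Some ` E)"
    then obtain e where "x = Some e" "e \<notin> E" by (cases x) auto
    then show "Y x = Zer" using a by (auto simp: signvecs_iff)
  qed
qed

lemma restr_comp[simp]: "restr (comp Y1 Y2) = comp (restr Y1) (restr Y2)" by (rule ext) simp
lemma restr_opp[simp]: "restr (opp Y) = opp (restr Y)" by (rule ext) simp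

lemma comp_offsep:
  assumes "supp X = supp Y" "f \<notin> sep X Y"
  shows "comp X Y f = X f \<and> comp Y X f = X f"
proof -
  have "Y f = X f" by (rule offsep_eq[OF assms])
  then show ?thesis by simp
qed

context axW
begin

definition OMW :: "'a option sv set" where
  "OMW = {Y \<in> signvecs (insert None (Some ` E)).
      (Y None = Pos \<and> restr Y \<in> W) \<or> (Y None = Neg \<and> opp (restr Y) \<in> W) \<or> (Y None = Zer \<and> restr Y \<in> D)}"

definition good :: "'a sv \<Rightarrow> sign \<Rightarrow> bool" where
  "good X s \<longleftrightarrow> (s = Pos \<and> X \<in> W) \<or> (s = Neg \<and> opp X \<in> W) \<or> (s = Zer \<and> X \<in> D)"

lemma good_sv: "good X s \<Longrightarrow> X \<in> signvecs E"
proof -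
  assume g: "good X s"
  show ?thesis
  proof (cases s)
    case Pos then show ?thesis using g W_sv by (simp add: good_def)
  next
    case Neg then have "opp X \<in> W" using g by (simp add: good_def)
    then have "opp (opp X) \<in> signvecs E" by (intro opp_sv W_sv)
    then show ?thesis by simp
  next
    case Zer then show ?thesis using g D_sv by (simp add: good_def)
  qed
qed

lemma OMW_iff: "Y \<in> OMW \<longleftrightarrow> good (restr Y) (Y None)"
proof -
  have "Y \<in> OMW \<longleftrightarrow> Y \<in> signvecs (insert None (Some ` E)) \<and> good (restr Y) (Y None)"
    unfolding OMW_def good_def by (rule mem_Collect_eq)
  then show ?thesis using good_sv sv_lift by blast
qed

lemma lift_OMW: "good X s \<Longrightarrow> lift X s \<in> OMW"
  unfolding OMW_iff by simp

lemma compW: "X \<in> W \<Longrightarrow> Y \<in> W \<or> opp Y \<in> W \<or> Y \<in> D \<Longrightarrow> comp X Y \<in> W"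
proof -
  assume X: "X \<in> W" and "Y \<in> W \<or> opp Y \<in> W \<or> Y \<in> D"
  then consider "Y \<in> W" | "opp Y \<in> W" | "Y \<in> D" by blast
  then show ?thesis
  proof cases
    case 1 then show ?thesis using W_comp[OF X] by blast
  next
    case 2 then show ?thesis using W_comp_opp[OF X 2] by simp
  next
    case 3 then show ?thesis using W_comp_D[OF X] by blast
  qed
qed

lemma OMW_comp: "Y1 \<in> OMW \<Longrightarrow> Y2 \<in> OMW \<Longrightarrow> comp Y1 Y2 \<in> OMW"
proof -
  assume "Y1 \<in> OMW" "Y2 \<in> OMW"
  then have g1: "good (restr Y1) (Y1 None)" and g2: "good (restr Y2) (Y2 None)" by (simp_all add: OMW_iff)
  define X1 where "X1 = restr Y1"
  define X2 where "X2 = restr Y2"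
  have "good (comp X1 X2) (comp Y1 Y2 None)"
  proof (cases "Y1 None")
    case Pos
    then have "X1 \<in> W" "X2 \<in> W \<or> opp X2 \<in> W \<or> X2 \<in> D" using g1 g2 unfolding X1_def X2_def good_def by auto
    then show ?thesis using Pos compW by (simp add: good_def)
  next
    case Neg
    then have "opp X1 \<in> W" "opp X2 \<in> W \<or> opp (opp X2) \<in> W \<or> opp X2 \<in> D"
      using g1 g2 D_opp unfolding X1_def X2_def good_def by auto
    then have "comp (opp X1) (opp X2) \<in> W" using compW by blast
    then show ?thesis using Neg by (simp add: good_def opp_comp)
  next
    case Zer
    then have X1D: "X1 \<in> D" using g1 unfolding X1_def good_def by auto
    show ?thesis
    proof (cases "Y2 None")
      case Pos
      then have "X2 \<in> W" using g2 unfolding X2_def good_def by auto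
      then show ?thesis using Zer Pos D_compW[OF X1D] by (simp add: good_def)
    next
      case Neg
      then have "opp X2 \<in> W" using g2 unfolding X2_def good_def by auto
      then have "comp (opp X1) (opp X2) \<in> W" using D_compW[OF D_opp[OF X1D]] by blast
      then show ?thesis using Zer Neg by (simp add: good_def opp_comp)
    next
      case Zer2: Zer
      then have "X2 \<in> D" using g2 unfolding X2_def good_def by auto
      then show ?thesis using Zer Zer2 D_comp X1D by (simp add: good_def)
    qed
  qed
  then show ?thesis unfolding OMW_iff X1_def X2_def by simp
qed

lemma OMW_opp: "Y \<in> OMW \<Longrightarrow> opp Y \<in> OMW"
  unfolding OMW_iff good_def restr_opp using D_opp by (cases "Y None") (simp_all del: restr_apply)

lemma OMW_zero: "(\<lambda>_. Zer) \<in> OMW"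
proof -
  have r: "restr (\<lambda>_. Zer) = (\<lambda>_. Zer)" by (rule ext) simp
  show ?thesis unfolding OMW_iff good_def r using D_zero by simp
qed

end

lemma lift_agree:
  assumes "\<And>j. j \<notin> sep (restr Y1) (restr Y2) \<Longrightarrow> T j = Y1 (Some j)"
    and "None \<notin> sep Y1 Y2 \<Longrightarrow> s = Y1 None"
  shows "\<forall>f. f \<notin> sep Y1 Y2 \<longrightarrow> lift T s f = Y1 f"
proof (intro allI impI)
  fix f assume f: "f \<notin> sep Y1 Y2"
  show "lift T s f = Y1 f"
  proof (cases f)
    case None then show ?thesis using assms(2) f by simp
  next
    case (Some j)
    have "j \<notin> sep (restr Y1) (restr Y2)" using f Some by simp
    then show ?thesis using assms(1) Some by simp
  qed
qed

context axW
begin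

lemma good_ex: "Z \<in> W \<or> opp Z \<in> W \<or> Z \<in> D \<Longrightarrow> \<exists>s. good Z s"
  unfolding good_def by blast

lemma OMW_elim1:
  assumes Y1: "Y1 \<in> OMW" and Y2: "Y2 \<in> OMW" and s: "supp Y1 = supp Y2"
    and e: "e \<in> sep Y1 Y2" and nc: "\<not> (Y1 None = Neg \<and> Y2 None = Pos)"
  shows "\<exists>Z\<in>OMW. Z e = Zer \<and> (\<forall>f. f \<notin> sep Y1 Y2 \<longrightarrow> Z f = Y1 f)"
proof -
  define X1 where "X1 = restr Y1"
  define X2 where "X2 = restr Y2"
  have g1: "good X1 (Y1 None)" and g2: "good X2 (Y2 None)"
    using Y1 Y2 unfolding X1_def X2_def OMW_iff by auto
  have sX: "supp X1 = supp X2"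
    by (rule set_eqI) (simp add: X1_def X2_def supp_eqD[OF s])
  have sN: "Y1 None = Zer \<longleftrightarrow> Y2 None = Zer" using supp_eqD[OF s, of None] .
  have X1S: "X1 j = Y1 (Some j)" for j by (simp add: X1_def)
  show ?thesis
  proof (cases "Y1 None")
    case Pos
    then have X1W: "X1 \<in> W" using g1 by (simp add: good_def)
    show ?thesis
    proof (cases "Y2 None")
      case Zer then show ?thesis using sN Pos by simp
    next
      case Pos2: Pos
      then have X2W: "X2 \<in> W" using g2 by (simp add: good_def)
      obtain k where ek: "e = Some k" using e Pos Pos2 by (cases e) auto
      have k: "k \<in> sep X1 X2" using e ek by (simp add: X1_def X2_def)
      obtain T where T: "T \<in> W" "T k = Zer" "\<forall>f. f \<notin> sep X1 X2 \<longrightarrow> T f = X1 f"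
        using W_elim[OF X1W X2W sX k] by blast
      have "lift T Pos \<in> OMW" using T by (intro lift_OMW) (simp add: good_def)
      moreover have "\<forall>f. f \<notin> sep Y1 Y2 \<longrightarrow> lift T Pos f = Y1 f"
        by (rule lift_agree) (use T X1S Pos in \<open>auto simp: X1_def X2_def\<close>)
      moreover have "lift T Pos e = Zer" using T ek by simp
      ultimately show ?thesis by blast
    next
      case Neg2: Neg
      define B where "B = opp X2"
      have BW: "B \<in> W" using g2 Neg2 by (simp add: good_def B_def)
      have X2B: "X2 = opp B" by (simp add: B_def)
      have sB: "supp X1 = supp B" using sX by (simp add: B_def)
      have Nsep: "None \<in> sep Y1 Y2" using Pos Neg2 by simp
      show ?thesis
      proof (cases e)
        case None
        obtain Z where Z: "Z \<in> D" "\<forall>f. f \<notin> sep X1 (opp B) \<longrightarrow> Z f = X1 f"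
          using H1[OF X1W BW sB] by blast
        have "lift Z Zer \<in> OMW" using Z by (intro lift_OMW) (simp add: good_def)
        moreover have "\<forall>f. f \<notin> sep Y1 Y2 \<longrightarrow> lift Z Zer f = Y1 f"
        proof (rule lift_agree)
          fix j assume "j \<notin> sep (restr Y1) (restr Y2)"
          then have "j \<notin> sep X1 X2" unfolding X1_def X2_def .
          then have "j \<notin> sep X1 (opp B)" using X2B by simp
          then show "Z j = Y1 (Some j)" using Z(2) X1S by simp
        qed (use Nsep in blast)
        moreover have "lift Z Zer e = Zer" using None by simp
        ultimately show ?thesis by blast
      next
        case (Some k)
        have "k \<in> sep X1 X2" using e Some by (simp add: X1_def X2_def)
        then have k: "k \<in> sep X1 (opp B)" using X2B by simp
        obtain Z where Z: "Z \<in> W \<or> opp Z \<in> W \<or> Z \<in> D" "Z k = Zer"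
            "\<forall>f. f \<notin> sep X1 (opp B) \<longrightarrow> Z f = X1 f"
          using H2[OF X1W BW sB k] by blast
        obtain s' where gs: "good Z s'" using good_ex[OF Z(1)] by blast
        have "lift Z s' \<in> OMW" using gs by (rule lift_OMW)
        moreover have "\<forall>f. f \<notin> sep Y1 Y2 \<longrightarrow> lift Z s' f = Y1 f"
        proof (rule lift_agree)
          fix j assume "j \<notin> sep (restr Y1) (restr Y2)"
          then have "j \<notin> sep X1 X2" unfolding X1_def X2_def .
          then have "j \<notin> sep X1 (opp B)" using X2B by simp
          then show "Z j = Y1 (Some j)" using Z(3) X1S by simp
        qed (use Nsep in blast)
        moreover have "lift Z s' e = Zer" using Some Z(2) by simp
        ultimately show ?thesis by blast
      qed
    qed
  next
    case Neg
    then have Neg2: "Y2 None = Neg" using nc sN by (cases "Y2 None") auto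
    have A1W: "opp X1 \<in> W" using g1 Neg by (simp add: good_def)
    have A2W: "opp X2 \<in> W" using g2 Neg2 by (simp add: good_def)
    have sA: "supp (opp X1) = supp (opp X2)" using sX by simp
    obtain k where ek: "e = Some k" using e Neg Neg2 by (cases e) auto
    have k: "k \<in> sep (opp X1) (opp X2)" using e ek by (auto simp: X1_def X2_def)
    obtain T where T: "T \<in> W" "T k = Zer" "\<forall>f. f \<notin> sep (opp X1) (opp X2) \<longrightarrow> T f = opp X1 f"
      using W_elim[OF A1W A2W sA k] by blast
    have "lift (opp T) Neg \<in> OMW" using T by (intro lift_OMW) (simp add: good_def)
    moreover have "\<forall>f. f \<notin> sep Y1 Y2 \<longrightarrow> lift (opp T) Neg f = Y1 f"
    proof (rule lift_agree)
      fix j assume j: "j \<notin> sep (restr Y1) (restr Y2)"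
      then have "j \<notin> sep (opp X1) (opp X2)" by (auto simp: X1_def X2_def)
      then have "T j = opp X1 j" using T(3) by blast
      then show "opp T j = Y1 (Some j)" by (simp add: X1_def)
    qed (use Neg in simp)
    moreover have "lift (opp T) Neg e = Zer" using T ek by simp
    ultimately show ?thesis by blast
  next
    case Zer
    then have Zer2: "Y2 None = Zer" using sN by simp
    have X1D: "X1 \<in> D" using g1 Zer by (simp add: good_def)
    have X2D: "X2 \<in> D" using g2 Zer2 by (simp add: good_def)
    obtain k where ek: "e = Some k" using e Zer Zer2 by (cases e) auto
    have k: "k \<in> sep X1 X2" using e ek by (simp add: X1_def X2_def)
    obtain T where T: "T \<in> D" "T k = Zer" "\<forall>f. f \<notin> sep X1 X2 \<longrightarrow> T f = X1 f"
      using D_elim[OF X1D X2D sX k] by blast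
    have "lift T Zer \<in> OMW" using T by (intro lift_OMW) (simp add: good_def)
    moreover have "\<forall>f. f \<notin> sep Y1 Y2 \<longrightarrow> lift T Zer f = Y1 f"
      by (rule lift_agree) (use T X1S Zer in \<open>auto simp: X1_def X2_def\<close>)
    moreover have "lift T Zer e = Zer" using T ek by simp
    ultimately show ?thesis by blast
  qed
qed

end

context axW
begin

lemma OMW_OM: "oriented_matroid (insert None (Some ` E)) OMW"
  unfolding oriented_matroid_def
proof (intro conjI ballI impI)
  show "OMW \<subseteq> signvecs (insert None (Some ` E))" unfolding OMW_def by blast
  show "(\<lambda>_. Zer) \<in> OMW" by (rule OMW_zero)
next
  fix X assume "X \<in> OMW" then show "opp X \<in> OMW" by (rule OMW_opp)
next
  fix X Y assume "X \<in> OMW" "Y \<in> OMW" then show "comp X Y \<in> OMW" by (rule OMW_comp)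
next
  fix X Y e assume X: "X \<in> OMW" and Y: "Y \<in> OMW" and s: "supp X = supp Y" and e: "e \<in> sep X Y"
  obtain Z where Z: "Z \<in> OMW" "Z e = Zer" "\<forall>f. f \<notin> sep X Y \<longrightarrow> Z f = X f"
  proof (cases "X None = Neg \<and> Y None = Pos")
    case False
    then show ?thesis using OMW_elim1[OF X Y s e] that by blast
  next
    case True
    have s': "supp Y = supp X" using s by simp
    have e': "e \<in> sep Y X" using e by (simp add: sep_sym)
    have nc: "\<not> (Y None = Neg \<and> X None = Pos)" using True by simp
    obtain Z where Z: "Z \<in> OMW" "Z e = Zer" "\<forall>f. f \<notin> sep Y X \<longrightarrow> Z f = Y f"
      using OMW_elim1[OF Y X s' e' nc] by blast
    have "\<forall>f. f \<notin> sep X Y \<longrightarrow> Z f = X f"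
    proof (intro allI impI)
      fix f assume f: "f \<notin> sep X Y"
      then have "f \<notin> sep Y X" by (simp add: sep_sym)
      then have "Z f = Y f" using Z(3) by blast
      also have "Y f = X f" using offsep_eq[OF s f] .
      finally show "Z f = X f" .
    qed
    then show ?thesis using that Z by blast
  qed
  show "\<exists>Z\<in>OMW. Z e = Zer \<and> (\<forall>f. f \<notin> sep X Y \<longrightarrow> Z f = comp X Y f \<and> Z f = comp Y X f)"
  proof (intro bexI conjI allI impI)
    fix f assume f: "f \<notin> sep X Y"
    have "Z f = X f" using Z(3) f by blast
    then show "Z f = comp X Y f" "Z f = comp Y X f" using comp_offsep[OF s f] by simp_all
  next
    show "Z e = Zer" by (rule Z(2))
  next
    show "Z \<in> OMW" by (rule Z(1))
  qed
qed

lemma affine: "affine_oriented_matroid E W"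
  unfolding affine_oriented_matroid_def
proof (intro exI conjI)
  show "oriented_matroid (insert None (Some ` E)) OMW" by (rule OMW_OM)
  show "W = {(\<lambda>e. X (Some e)) | X. X \<in> OMW \<and> X None = Pos}"
  proof
    show "W \<subseteq> {(\<lambda>e. X (Some e)) | X. X \<in> OMW \<and> X None = Pos}"
    proof
      fix X assume X: "X \<in> W"
      have "lift X Pos \<in> OMW" using X by (intro lift_OMW) (simp add: good_def)
      moreover have "X = (\<lambda>e. lift X Pos (Some e))" by simp
      ultimately show "X \<in> {(\<lambda>e. X (Some e)) | X. X \<in> OMW \<and> X None = Pos}"
        by (intro CollectI exI[of _ "lift X Pos"]) simp
    qed
  next
    show "{(\<lambda>e. X (Some e)) | X. X \<in> OMW \<and> X None = Pos} \<subseteq> W"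
    proof
      fix V assume "V \<in> {(\<lambda>e. X (Some e)) | X. X \<in> OMW \<and> X None = Pos}"
      then obtain Y where Y: "V = (\<lambda>e. Y (Some e))" "Y \<in> OMW" "Y None = Pos" by blast
      have "good (restr Y) (Y None)" using Y(2) by (simp add: OMW_iff)
      then have "restr Y \<in> W" using Y(3) by (simp add: good_def)
      then show "V \<in> W" using Y(1) by (simp add: restr_def)
    qed
  qed
qed

end

lemma converse:
  assumes "finite E" "W \<subseteq> signvecs E" "A1 W" "A2 E W" "A3 E W"
  shows "affine_oriented_matroid E W"
proof -
  interpret axW E W using assms by unfold_locales
  show ?thesis by (rule affine)
qed

lemma comp_lift: "comp (lift X s) (lift Y t) = lift (comp X Y) (if s = Zer then t else s)"
  by (rule ext) (simp add: lift_def split: option.split)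

lemma opp_lift: "opp (lift X s) = lift (opp X) (neg_sign s)"
  by (rule ext) (simp add: lift_def split: option.split)

lemma supp_lift:
  assumes "supp X = supp Y" "s = Zer \<longleftrightarrow> t = Zer"
  shows "supp (lift X s) = supp (lift Y t)"
proof (rule set_eqI)
  fix x show "x \<in> supp (lift X s) \<longleftrightarrow> x \<in> supp (lift Y t)"
    using assms(2) supp_eqD[OF assms(1)] by (cases x) simp_all
qed

locale fwd =
  fixes E :: "'a set" and W :: "'a sv set" and OM :: "'a option sv set"
  assumes subW: "W \<subseteq> signvecs E"
    and om: "oriented_matroid (insert None (Some ` E)) OM"
    and Wdef: "W = {(\<lambda>e. X (Some e)) | X. X \<in> OM \<and> X None = Pos}"
begin

lemmas omd = om[unfolded oriented_matroid_def]

lemma om_sv: "Y \<in> OM \<Longrightarrow> restr Y \<in> signvecs E"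
proof -
  assume "Y \<in> OM"
  moreover have "OM \<subseteq> signvecs (insert None (Some ` E))" using omd by (rule conjunct1)
  ultimately have "Y \<in> signvecs (insert None (Some ` E))" by blast
  then show ?thesis using sv_lift by blast
qed
lemma om_opp: "Y \<in> OM \<Longrightarrow> opp Y \<in> OM"
proof -
  have "\<forall>X\<in>OM. opp X \<in> OM" using omd by (elim conjE)
  then show "Y \<in> OM \<Longrightarrow> opp Y \<in> OM" by blast
qed
lemma om_comp: "Y \<in> OM \<Longrightarrow> Z \<in> OM \<Longrightarrow> comp Y Z \<in> OM"
proof -
  have "\<forall>X\<in>OM. \<forall>Y\<in>OM. comp X Y \<in> OM" using omd by (elim conjE)
  then show "Y \<in> OM \<Longrightarrow> Z \<in> OM \<Longrightarrow> comp Y Z \<in> OM" by blast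
qed
lemma om_elim:
  assumes "Y1 \<in> OM" "Y2 \<in> OM" "supp Y1 = supp Y2" "e \<in> sep Y1 Y2"
  shows "\<exists>Z\<in>OM. Z e = Zer \<and> (\<forall>f. f \<notin> sep Y1 Y2 \<longrightarrow> Z f = comp Y1 Y2 f)"
proof -
  have h: "\<forall>X\<in>OM. \<forall>Y\<in>OM. supp X = supp Y \<longrightarrow> (\<forall>e\<in>sep X Y.
        (\<exists>Z\<in>OM. Z e = Zer \<and> (\<forall>f. f \<notin> sep X Y \<longrightarrow> Z f = comp X Y f \<and> Z f = comp Y X f)))"
    using omd by (elim conjE)
  obtain Z where Z: "Z \<in> OM" "Z e = Zer" "\<forall>f. f \<notin> sep Y1 Y2 \<longrightarrow> Z f = comp Y1 Y2 f \<and> Z f = comp Y2 Y1 f"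
    using h[rule_format, OF assms] by blast
  show ?thesis using Z by blast
qed

lemma W_iff: "X \<in> W \<longleftrightarrow> lift X Pos \<in> OM"
proof
  assume "X \<in> W"
  then obtain Y where Y: "X = (\<lambda>e. Y (Some e))" "Y \<in> OM" "Y None = Pos" unfolding Wdef by blast
  have "X = restr Y" using Y(1) by (simp add: restr_def)
  then have "lift X Pos = Y" using lift_restr[of Y] Y(3) by simp
  then show "lift X Pos \<in> OM" using Y(2) by simp
next
  assume a: "lift X Pos \<in> OM"
  have "X = (\<lambda>e. lift X Pos (Some e))" by simp
  then show "X \<in> W" unfolding Wdef using a by (intro CollectI exI[of _ "lift X Pos"]) simp
qed

lemma restr_W: "Y \<in> OM \<Longrightarrow> Y None = Pos \<Longrightarrow> restr Y \<in> W"
  unfolding W_iff using lift_restr[of Y] by simp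

lemma fA1: "A1 W"
  unfolding A1_def
proof (intro ballI conjI)
  fix X Y assume X: "X \<in> W" and Y: "Y \<in> W"
  then have LX: "lift X Pos \<in> OM" and LY: "lift Y Pos \<in> OM" by (simp_all add: W_iff)
  have "comp (lift X Pos) (lift Y Pos) \<in> OM" using om_comp[OF LX LY] .
  then show "comp X Y \<in> W" by (simp add: W_iff comp_lift)
  have "comp (lift X Pos) (opp (lift Y Pos)) \<in> OM" using om_comp[OF LX om_opp[OF LY]] .
  then show "comp X (opp Y) \<in> W" by (simp add: W_iff comp_lift opp_lift)
qed

lemma fA2: "A2 E W"
  unfolding A2_def
proof (intro ballI impI)
  fix X Y e assume X: "X \<in> W" and Y: "Y \<in> W" and s: "supp X = supp Y" and e: "e \<in> sep X Y"
  then have LX: "lift X Pos \<in> OM" and LY: "lift Y Pos \<in> OM" by (simp_all add: W_iff)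
  have sL: "supp (lift X Pos) = supp (lift Y Pos)" by (rule supp_lift[OF s]) simp
  have eL: "Some e \<in> sep (lift X Pos) (lift Y Pos)" using e by simp
  obtain Z where Z: "Z \<in> OM" "Z (Some e) = Zer"
     "\<forall>f. f \<notin> sep (lift X Pos) (lift Y Pos) \<longrightarrow> Z f = comp (lift X Pos) (lift Y Pos) f"
    using om_elim[OF LX LY sL eL] by blast
  have ZN: "Z None = Pos" using Z(3) by simp
  have ZW: "restr Z \<in> W" using restr_W[OF Z(1) ZN] .
  have Zoff: "restr Z j = X j" if "j \<notin> sep X Y" for j
  proof -
    have "Some j \<notin> sep (lift X Pos) (lift Y Pos)" using that by simp
    then have "Z (Some j) = comp X Y j" using Z(3) by simp
    then show ?thesis using offsep_eq[OF s that] by simp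
  qed
  have "restr Z \<in> I_e E e X Y"
    unfolding I_e_def
  proof (intro CollectI conjI ballI impI)
    show "restr Z \<in> signvecs E" using om_sv[OF Z(1)] .
    show "supp (restr Z) \<subseteq> supp X - {e}"
    proof
      fix j assume j: "j \<in> supp (restr Z)"
      have "j \<noteq> e" using j Z(2) by auto
      moreover have "X j \<noteq> Zer"
      proof (cases "j \<in> sep X Y")
        case True then show ?thesis by auto
      next
        case False then show ?thesis using Zoff[OF False] j by simp
      qed
      ultimately show "j \<in> supp X - {e}" by simp
    qed
    fix f assume "f \<in> E" "f \<notin> sep X Y"
    then show "restr Z f = X f" using Zoff by blast
  qed
  then show "I_e E e X Y \<inter> W \<noteq> {}" using ZW by blast
qed

end

context fwd
begin

lemma P_lift:
  assumes XW: "X \<in> W" and YW: "Y \<in> W" and s: "supp X = supp Y"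
    and I1: "I_all E X (opp Y) \<inter> W = {}" and I2: "I_all E (opp X) Y \<inter> W = {}"
  shows "lift (sv_sum X (opp Y)) Zer \<in> OM"
proof -
  define S where "S = sep X (opp Y)"
  have LX: "lift X Pos \<in> OM" and LY: "lift Y Pos \<in> OM" using XW YW by (simp_all add: W_iff)
  have LY': "lift (opp Y) Neg \<in> OM" using om_opp[OF LY] by (simp add: opp_lift)
  have sL: "supp (lift X Pos) = supp (lift (opp Y) Neg)" by (rule supp_lift) (simp_all add: s)
  have eL: "None \<in> sep (lift X Pos) (lift (opp Y) Neg)" by simp
  obtain R where R: "R \<in> OM" "R None = Zer"
     "\<forall>f. f \<notin> sep (lift X Pos) (lift (opp Y) Neg) \<longrightarrow> R f = comp (lift X Pos) (lift (opp Y) Neg) f"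
    using om_elim[OF LX LY' sL eL] by blast
  have Roff: "R (Some j) = X j" if "j \<notin> S" for j
  proof -
    have "Some j \<notin> sep (lift X Pos) (lift (opp Y) Neg)" using that unfolding S_def by simp
    then have "R (Some j) = comp X (opp Y) j" using R(3) by simp
    moreover have "opp Y j = X j" using offsep_opp[OF s] that unfolding S_def by blast
    ultimately show ?thesis by simp
  qed
  have Rsupp: "X j \<noteq> Zer" if "R (Some j) \<noteq> Zer" for j
  proof (cases "j \<in> S")
    case True then show ?thesis unfolding S_def by auto
  next
    case False then show ?thesis using Roff[OF False] that by simp
  qed
  have XYS: "Y j = X j" if "j \<in> S" for j using that unfolding S_def by auto
  have YXoff: "Y j = neg_sign (X j)" if "j \<notin> S" for j
  proof -
    have "opp Y j = X j" using offsep_opp[OF s] that unfolding S_def by blast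
    then show ?thesis by (metis neg_neg_sign opp_apply)
  qed
  have XY0: "X i = Zer \<longleftrightarrow> Y i = Zer" for i using supp_eqD[OF s] .
  have c1: False if j: "j \<in> S" "R (Some j) = X j" "X j \<noteq> Zer" for j
  proof -
    define C where "C = comp (opp R) (lift Y Pos)"
    have CO: "C \<in> OM" unfolding C_def using om_comp[OF om_opp[OF R(1)] LY] .
    have CN: "C None = Pos" unfolding C_def using R(2) by simp
    have CS: "C (Some i) = (if R (Some i) = Zer then Y i else neg_sign (R (Some i)))" for i
      unfolding C_def by simp
    have sC: "supp C = supp (lift Y Pos)"
    proof (rule set_eqI)
      fix x show "x \<in> supp C \<longleftrightarrow> x \<in> supp (lift Y Pos)"
      proof (cases x)
        case None then show ?thesis using CN by simp
      next
        case (Some i)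
        have "R (Some i) \<noteq> Zer \<Longrightarrow> Y i \<noteq> Zer" using Rsupp[of i] XY0[of i] by blast
        then show ?thesis using Some CS[of i] by auto
      qed
    qed
    have eC: "Some j \<in> sep C (lift Y Pos)" using CS[of j] j XYS[OF j(1)] by (cases "X j") auto
    obtain Q where Q: "Q \<in> OM" "Q (Some j) = Zer"
       "\<forall>f. f \<notin> sep C (lift Y Pos) \<longrightarrow> Q f = comp C (lift Y Pos) f"
      using om_elim[OF CO LY sC eC] by blast
    have QN: "Q None = Pos" using Q(3) CN by simp
    have QW: "restr Q \<in> W" using restr_W[OF Q(1) QN] .
    have QI: "restr Q \<in> I_e E j (opp X) Y"
      unfolding I_e_def
    proof (intro CollectI conjI ballI impI)
      show "restr Q \<in> signvecs E" using om_sv[OF Q(1)] .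
      show "supp (restr Q) \<subseteq> supp (opp X) - {j}"
      proof
        fix i assume i: "i \<in> supp (restr Q)"
        have "i \<noteq> j" using i Q(2) by auto
        moreover have "Y i \<noteq> Zer"
        proof (cases "Some i \<in> sep C (lift Y Pos)")
          case True then show ?thesis by auto
        next
          case False
          then have "Q (Some i) = comp C (lift Y Pos) (Some i)" using Q(3) by blast
          moreover have "Q (Some i) \<noteq> Zer" using i by simp
          moreover have "C (Some i) \<noteq> Zer \<Longrightarrow> Y i \<noteq> Zer" using sC supp_eqD[OF sC, of "Some i"] by simp
          ultimately show ?thesis by (auto split: if_splits)
        qed
        ultimately show "i \<in> supp (opp X) - {j}" using XY0[of i] by simp
      qed
      fix f assume f: "f \<in> E" "f \<notin> sep (opp X) Y"
      then have fS: "f \<notin> S" unfolding S_def by (simp add: sep_opp)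
      have "C (Some f) = Y f" using CS[of f] Roff[OF fS] YXoff[OF fS] by (cases "X f") auto
      then have "Some f \<notin> sep C (lift Y Pos)" by (cases "Y f") auto
      then have "Q (Some f) = comp C (lift Y Pos) (Some f)" using Q(3) by blast
      then show "restr Q f = opp X f" using \<open>C (Some f) = Y f\<close> YXoff[OF fS] by simp
    qed
    have "j \<in> sep (opp X) Y" using j(1) unfolding S_def by (simp add: sep_opp)
    then have "restr Q \<in> I_all E (opp X) Y" using QI unfolding I_all_def by blast
    then show False using I2 QW by blast
  qed
  have c2: False if j: "j \<in> S" "R (Some j) = neg_sign (X j)" "X j \<noteq> Zer" for j
  proof -
    define C where "C = comp R (lift X Pos)"
    have CO: "C \<in> OM" unfolding C_def using om_comp[OF R(1) LX] .
    have CN: "C None = Pos" unfolding C_def using R(2) by simp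
    have CS: "C (Some i) = (if R (Some i) = Zer then X i else R (Some i))" for i
      unfolding C_def by simp
    have sC: "supp (lift X Pos) = supp C"
    proof (rule set_eqI)
      fix x show "x \<in> supp (lift X Pos) \<longleftrightarrow> x \<in> supp C"
      proof (cases x)
        case None then show ?thesis using CN by simp
      next
        case (Some i)
        then show ?thesis using Some CS[of i] Rsupp[of i] by auto
      qed
    qed
    have eC: "Some j \<in> sep (lift X Pos) C" using CS[of j] j by (cases "X j") auto
    obtain Q where Q: "Q \<in> OM" "Q (Some j) = Zer"
       "\<forall>f. f \<notin> sep (lift X Pos) C \<longrightarrow> Q f = comp (lift X Pos) C f"
      using om_elim[OF LX CO sC eC] by blast
    have QN: "Q None = Pos" using Q(3) CN by simp
    have QW: "restr Q \<in> W" using restr_W[OF Q(1) QN] .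
    have QI: "restr Q \<in> I_e E j X (opp Y)"
      unfolding I_e_def
    proof (intro CollectI conjI ballI impI)
      show "restr Q \<in> signvecs E" using om_sv[OF Q(1)] .
      show "supp (restr Q) \<subseteq> supp X - {j}"
      proof
        fix i assume i: "i \<in> supp (restr Q)"
        have "i \<noteq> j" using i Q(2) by auto
        moreover have "X i \<noteq> Zer"
        proof (cases "Some i \<in> sep (lift X Pos) C")
          case True then show ?thesis by auto
        next
          case False
          then have "Q (Some i) = comp (lift X Pos) C (Some i)" using Q(3) by blast
          moreover have "Q (Some i) \<noteq> Zer" using i by simp
          moreover have "C (Some i) \<noteq> Zer \<Longrightarrow> X i \<noteq> Zer" using supp_eqD[OF sC, of "Some i"] by simp
          ultimately show ?thesis by (auto split: if_splits)
        qed
        ultimately show "i \<in> supp X - {j}" by simp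
      qed
      fix f assume f: "f \<in> E" "f \<notin> sep X (opp Y)"
      then have fS: "f \<notin> S" unfolding S_def by simp
      have "C (Some f) = X f" using CS[of f] Roff[OF fS] by (cases "X f") auto
      then have "Some f \<notin> sep (lift X Pos) C" by (cases "X f") auto
      then have "Q (Some f) = comp (lift X Pos) C (Some f)" using Q(3) by blast
      then show "restr Q f = X f" using \<open>C (Some f) = X f\<close> by simp
    qed
    have "j \<in> sep X (opp Y)" using j(1) unfolding S_def .
    then have "restr Q \<in> I_all E X (opp Y)" using QI unfolding I_all_def by blast
    then show False using I1 QW by blast
  qed
  have RS: "R (Some j) = Zer" if "j \<in> S" for j
  proof (rule ccontr)
    assume nz: "R (Some j) \<noteq> Zer"
    have Xj: "X j \<noteq> Zer" using that unfolding S_def by auto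
    show False
    proof (cases "R (Some j) = X j")
      case True show False by (rule c1[OF that True Xj])
    next
      case False
      then have "R (Some j) = neg_sign (X j)" using nz Xj by (cases "R (Some j)"; cases "X j") auto
      then show False using c2[OF that _ Xj] by blast
    qed
  qed
  have "lift (sv_sum X (opp Y)) Zer = R"
  proof
    fix x show "lift (sv_sum X (opp Y)) Zer x = R x"
    proof (cases x)
      case None then show ?thesis using R(2) by simp
    next
      case (Some j)
      show ?thesis
      proof (cases "j \<in> S")
        case True then show ?thesis using Some RS[OF True] unfolding S_def by (simp add: sv_sum_apply)
      next
        case False
        have "opp Y j = X j" using offsep_opp[OF s] False unfolding S_def by blast
        then show ?thesis using Some Roff[OF False] False unfolding S_def by (simp add: sv_sum_apply)
      qed
    qed
  qed
  then show ?thesis using R(1) by simp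
qed

lemma fA3: "A3 E W"
  unfolding A3_def
proof
  fix V assume "V \<in> comp_set (P_set E W) W"
  then obtain p Z where V: "V = comp p Z" "p \<in> P_set E W" "Z \<in> W" unfolding comp_set_def by blast
  then obtain X Y where XY: "p = sv_sum X (opp Y)" "X \<in> asym_part W" "Y \<in> asym_part W"
    "supp X = supp Y" "I_all E X (opp Y) \<inter> W = {}" "I_all E (opp X) Y \<inter> W = {}"
    unfolding P_set_def by blast
  have "X \<in> W" "Y \<in> W" using XY(2,3) unfolding asym_part_def by auto
  then have "lift p Zer \<in> OM" using P_lift XY by blast
  moreover have "lift Z Pos \<in> OM" using V(3) by (simp add: W_iff)
  ultimately have "comp (lift p Zer) (lift Z Pos) \<in> OM" by (rule om_comp)
  then show "V \<in> W" using V(1) by (simp add: W_iff comp_lift)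
qed

end

lemma forward:
  assumes "W \<subseteq> signvecs E" "affine_oriented_matroid E W"
  shows "A1 W \<and> A2 E W \<and> A3 E W"
proof -
  obtain OM where "oriented_matroid (insert None (Some ` E)) OM"
      "W = {(\<lambda>e. X (Some e)) | X. X \<in> OM \<and> X None = Pos}"
    using assms(2) unfolding affine_oriented_matroid_def by blast
  then interpret fwd E W OM using assms(1) by unfold_locales auto
  show ?thesis using fA1 fA2 fA3 by blast
qed

theorem theorem2p1:
  fixes E :: "'a set" and W :: "('a \<Rightarrow> sign) set"
  assumes "finite E" and "W \<subseteq> signvecs E"
  shows "affine_oriented_matroid E W \<longleftrightarrow> (A1 W \<and> A2 E W \<and> A3 E W)"
proof
  assume "affine_oriented_matroid E W"
  then show "A1 W \<and> A2 E W \<and> A3 E W" using forward[OF assms(2)] by blast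
next
  assume "A1 W \<and> A2 E W \<and> A3 E W"
  then show "affine_oriented_matroid E W" using converse[OF assms] by blast
qed

end
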